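(* Let $J\subseteq[n]$ and let $w,w'\in W$ satisfy $W_Jw=W_Jw'$. Then for every $i\in\{0,1,\dots,n\}$ we have $W_J\,\sigma_i(w)=W_J\,\sigma_i(w')$.
   Context: Let $\Phi$ be an irreducible (crystallographic) root system of rank $n$ with simple roots $\alpha_1,\dots,\alpha_n$, and let $\alpha_0$ be the highest root with respect to this simple system. For $i\in\{0,\dots,n\}$ let $t_i$ be the reflection in the hyperplane orthogonal to $\alpha_i$. The Weyl group $W$ is generated by $t_1,\dots,t_n$, and $\ell$ is the length function with respect to $t_1,\dots,t_n$. For $w\in W$ and $1\le i\le n$, $\sigma_i(w)=w$ if $\ell(wt_i)>\ell(w)$ and $\sigma_i(w)=wt_i$ otherwise; $\sigma_0(w)=w$ if $\ell(wt_0)<\ell(w)$ and $\sigma_0(w)=wt_0$ otherwise. For $J\subseteq[n]$ (so $0\notin J$), $W_J$ is the subgroup of $W$ generated by $\{t_j:j\in J\}$, and $W_Jw$ denotes a right coset. *)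

theory Defs
  imports "HOL-Analysis.Analysis"
begin

definition rrefl :: "'a::real_inner \<Rightarrow> 'a \<Rightarrow> 'a" where
  "rrefl a x = x - ((2 * (x \<bullet> a)) / (a \<bullet> a)) *\<^sub>R a"

definition crystallographic_root_system :: "'a::euclidean_space set \<Rightarrow> bool" where
  "crystallographic_root_system Phi \<longleftrightarrow>
     finite Phi \<and> 0 \<notin> Phi \<and> span Phi = UNIV \<and>
     (\<forall>a\<in>Phi. \<forall>b\<in>Phi. rrefl a b \<in> Phi) \<and>
     (\<forall>a\<in>Phi. \<forall>b\<in>Phi. 2 * (b \<bullet> a) / (a \<bullet> a) \<in> \<int>) \<and>
     (\<forall>a\<in>Phi. \<forall>c. c *\<^sub>R a \<in> Phi \<longrightarrow> c = 1 \<or> c = -1)"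

definition irreducible_root_system :: "'a::euclidean_space set \<Rightarrow> bool" where
  "irreducible_root_system Phi \<longleftrightarrow>
     \<not> (\<exists>A B. A \<noteq> {} \<and> B \<noteq> {} \<and> A \<inter> B = {} \<and> A \<union> B = Phi \<and>
              (\<forall>a\<in>A. \<forall>b\<in>B. a \<bullet> b = 0))"

definition simple_system :: "'a::euclidean_space set \<Rightarrow> (nat \<Rightarrow> 'a) \<Rightarrow> bool" where
  "simple_system Phi alpha \<longleftrightarrow>
     inj_on alpha {1..DIM('a)} \<and> alpha ` {1..DIM('a)} \<subseteq> Phi \<and>
     independent (alpha ` {1..DIM('a)}) \<and>
     (\<forall>b\<in>Phi. \<exists>c::nat \<Rightarrow> int.
        b = (\<Sum>i=1..DIM('a). of_int (c i) *\<^sub>R alpha i) \<and>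
        ((\<forall>i\<in>{1..DIM('a)}. c i \<ge> 0) \<or> (\<forall>i\<in>{1..DIM('a)}. c i \<le> 0)))"

definition highest_root :: "'a::euclidean_space set \<Rightarrow> (nat \<Rightarrow> 'a) \<Rightarrow> 'a \<Rightarrow> bool" where
  "highest_root Phi alpha h \<longleftrightarrow> h \<in> Phi \<and>
     (\<forall>b\<in>Phi. \<exists>c::nat \<Rightarrow> int.
        h - b = (\<Sum>i=1..DIM('a). of_int (c i) *\<^sub>R alpha i) \<and> (\<forall>i\<in>{1..DIM('a)}. c i \<ge> 0))"

definition simple_refls :: "(nat \<Rightarrow> 'a::real_inner) \<Rightarrow> nat set \<Rightarrow> ('a \<Rightarrow> 'a) set" where
  "simple_refls alpha J = (\<lambda>i. rrefl (alpha i)) ` J"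

text \<open>Group generated by a set of involutions (all finite products).\<close>
definition gen_by :: "('a \<Rightarrow> 'a) set \<Rightarrow> ('a \<Rightarrow> 'a) set" where
  "gen_by S = {foldr (\<circ>) fs id | fs. set fs \<subseteq> S}"

definition weyl_group :: "(nat \<Rightarrow> 'a::euclidean_space) \<Rightarrow> ('a \<Rightarrow> 'a) set" where
  "weyl_group alpha = gen_by (simple_refls alpha {1..DIM('a)})"

definition parabolic :: "(nat \<Rightarrow> 'a::euclidean_space) \<Rightarrow> nat set \<Rightarrow> ('a \<Rightarrow> 'a) set" where
  "parabolic alpha J = gen_by (simple_refls alpha J)"

definition wlen :: "(nat \<Rightarrow> 'a::euclidean_space) \<Rightarrow> ('a \<Rightarrow> 'a) \<Rightarrow> nat" where
  "wlen alpha w = (LEAST k. \<exists>fs. set fs \<subseteq> simple_refls alpha {1..DIM('a)} \<and>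
                          length fs = k \<and> foldr (\<circ>) fs id = w)"

text \<open>sigma_i; here alpha 0 is the highest root and t_i = rrefl (alpha i); w t_i = w \<circ> t_i.\<close>
definition sigma :: "(nat \<Rightarrow> 'a::euclidean_space) \<Rightarrow> nat \<Rightarrow> ('a \<Rightarrow> 'a) \<Rightarrow> ('a \<Rightarrow> 'a)" where
  "sigma alpha i w =
     (if i = 0 then (if wlen alpha (w \<circ> rrefl (alpha 0)) < wlen alpha w then w else w \<circ> rrefl (alpha 0))
      else (if wlen alpha (w \<circ> rrefl (alpha i)) > wlen alpha w then w else w \<circ> rrefl (alpha i)))"

definition right_coset :: "(nat \<Rightarrow> 'a::euclidean_space) \<Rightarrow> nat set \<Rightarrow> ('a \<Rightarrow> 'a) \<Rightarrow> ('a \<Rightarrow> 'a) set" where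
  "right_coset alpha J w = (\<lambda>u. u \<circ> w) ` parabolic alpha J"

end

theory Submission
  imports Defs
begin

lemma rrefl_add: "rrefl a (x + y) = rrefl a x + rrefl a y"
  unfolding rrefl_def by (simp add: inner_add_left add_divide_distrib algebra_simps)

lemma rrefl_scale: "rrefl a (c *\<^sub>R x) = c *\<^sub>R rrefl a x"
  unfolding rrefl_def by (simp add: algebra_simps)

lemma linear_rrefl: "linear (rrefl a)"
  by (rule linearI) (simp_all add: rrefl_add rrefl_scale)

lemma rrefl_self: "a \<noteq> 0 \<Longrightarrow> rrefl a a = - a"
  unfolding rrefl_def by (simp add: algebra_simps scaleR_2)

lemma rrefl_invol: "a \<noteq> 0 \<Longrightarrow> rrefl a (rrefl a x) = x"
proof -
  assume a: "a \<noteq> 0"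
  have A: "a \<bullet> a \<noteq> 0" using a by simp
  show ?thesis unfolding rrefl_def using A
    by (simp add: inner_diff_left algebra_simps diff_divide_distrib)
qed

lemma rrefl_comp_self: "a \<noteq> 0 \<Longrightarrow> rrefl a \<circ> rrefl a = id"
  by (rule ext) (simp add: rrefl_invol)

lemma rrefl_inner: "a \<noteq> 0 \<Longrightarrow> rrefl a x \<bullet> rrefl a y = x \<bullet> y"
proof -
  assume a: "a \<noteq> 0"
  have A: "a \<bullet> a \<noteq> 0" using a by simp
  show ?thesis unfolding rrefl_def using A
    by (simp add: inner_diff_left inner_diff_right algebra_simps inner_commute)
qed

lemma rrefl_neg: "rrefl (- a) = rrefl a"
  by (rule ext) (simp add: rrefl_def)

lemma rrefl_conj:
  assumes "linear v" and "\<And>x y. v x \<bullet> v y = x \<bullet> y"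
  shows "v (rrefl b x) = rrefl (v b) (v x)"
  unfolding rrefl_def using assms by (simp add: linear_diff linear_scale)


lemma list_of_set: "set fs \<subseteq> f ` A \<Longrightarrow> \<exists>xs. set xs \<subseteq> A \<and> fs = map f xs"
proof (induction fs)
  case Nil then show ?case by auto
next
  case (Cons a fs)
  then obtain xs where "set xs \<subseteq> A" "fs = map f xs" by auto
  moreover obtain x where "x \<in> A" "a = f x" using Cons.prems by auto
  ultimately show ?case by (intro exI[of _ "x # xs"]) auto
qed

locale RS =
  fixes Phi :: "'a::euclidean_space set" and alpha :: "nat \<Rightarrow> 'a"
  assumes crys: "crystallographic_root_system Phi" and ss: "simple_system Phi alpha"
begin


lemma zero_notin: "0 \<notin> Phi" using crys unfolding crystallographic_root_system_def by auto
lemma refl_closed: "a \<in> Phi \<Longrightarrow> b \<in> Phi \<Longrightarrow> rrefl a b \<in> Phi"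
  using crys unfolding crystallographic_root_system_def by auto
lemma cryst_int: "a \<in> Phi \<Longrightarrow> b \<in> Phi \<Longrightarrow> 2 * (b \<bullet> a) / (a \<bullet> a) \<in> \<int>"
  using crys unfolding crystallographic_root_system_def by auto
lemma reduced: "a \<in> Phi \<Longrightarrow> c *\<^sub>R a \<in> Phi \<Longrightarrow> c = 1 \<or> c = -1"
  using crys unfolding crystallographic_root_system_def by auto
lemma alpha_in: "j \<in> {1..DIM('a)} \<Longrightarrow> alpha j \<in> Phi" using ss unfolding simple_system_def by auto
lemma alpha_nz: "j \<in> {1..DIM('a)} \<Longrightarrow> alpha j \<noteq> 0" using alpha_in zero_notin by metis
lemma root_nz: "b \<in> Phi \<Longrightarrow> b \<noteq> 0" using zero_notin by metis
lemma neg_closed: "b \<in> Phi \<Longrightarrow> - b \<in> Phi"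
  using refl_closed[of b b] rrefl_self[of b] root_nz by auto

lemma uniq:
  assumes "(\<Sum>j\<in>{1..DIM('a)}. c j *\<^sub>R alpha j) = (\<Sum>j\<in>{1..DIM('a)}. d j *\<^sub>R alpha j)" and "j \<in> {1..DIM('a)}"
  shows "c j = d j"
proof -
  have inj: "inj_on alpha {1..DIM('a)}" and ind: "independent (alpha ` {1..DIM('a)})"
    using ss unfolding simple_system_def by auto
  define u where "u v = (c (inv_into {1..DIM('a)} alpha v) - d (inv_into {1..DIM('a)} alpha v))" for v
  have "(\<Sum>v\<in>alpha ` {1..DIM('a)}. u v *\<^sub>R v) = (\<Sum>j\<in>{1..DIM('a)}. u (alpha j) *\<^sub>R alpha j)"
    by (rule sum.reindex[OF inj, unfolded o_def])
  also have "\<dots> = (\<Sum>j\<in>{1..DIM('a)}. (c j - d j) *\<^sub>R alpha j)"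
    by (intro sum.cong refl) (metis u_def inv_into_f_f[OF inj])
  also have "\<dots> = 0" using assms(1) by (simp add: scaleR_diff_left sum_subtractf)
  finally have "(\<Sum>v\<in>alpha ` {1..DIM('a)}. u v *\<^sub>R v) = 0" .
  then have "\<forall>v\<in>alpha ` {1..DIM('a)}. u v = 0" using ind dependent_explicit[of "alpha ` {1..DIM('a)}"] by blast
  then have "u (alpha j) = 0" using assms(2) by auto
  then show ?thesis unfolding u_def using inv_into_f_f[OF inj assms(2)] by simp
qed

definition pos where "pos b \<longleftrightarrow> b \<in> Phi \<and> (\<exists>c::nat\<Rightarrow>int. b = (\<Sum>j\<in>{1..DIM('a)}. of_int (c j) *\<^sub>R alpha j) \<and> (\<forall>j\<in>{1..DIM('a)}. c j \<ge> 0))"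
definition neg where "neg b \<longleftrightarrow> b \<in> Phi \<and> (\<exists>c::nat\<Rightarrow>int. b = (\<Sum>j\<in>{1..DIM('a)}. of_int (c j) *\<^sub>R alpha j) \<and> (\<forall>j\<in>{1..DIM('a)}. c j \<le> 0))"

lemma pos_or_neg: "b \<in> Phi \<Longrightarrow> pos b \<or> neg b"
  using ss unfolding simple_system_def pos_def neg_def by blast

lemma not_pos_neg: "pos b \<Longrightarrow> neg b \<Longrightarrow> False"
proof -
  assume "pos b" "neg b"
  then obtain c d where b: "b \<in> Phi" "b = (\<Sum>j\<in>{1..DIM('a)}. of_int (c j) *\<^sub>R alpha j)" "\<forall>j\<in>{1..DIM('a)}. c j \<ge> 0"
     "b = (\<Sum>j\<in>{1..DIM('a)}. of_int (d j) *\<^sub>R alpha j)" "\<forall>j\<in>{1..DIM('a)}. (d::nat\<Rightarrow>int) j \<le> 0"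
    unfolding pos_def neg_def by blast
  have "\<forall>j\<in>{1..DIM('a)}. c j = 0"
  proof
    fix j assume j: "j \<in> {1..DIM('a)}"
    have "real_of_int (c j) = real_of_int (d j)" using uniq[of "\<lambda>j. real_of_int (c j)" "\<lambda>j. real_of_int (d j)", OF _ j] b by simp
    then show "c j = 0" using b j by force
  qed
  then have "b = 0" using b(2) by simp
  then show False using b(1) zero_notin by simp
qed

lemma root_neg_iff: "b \<in> Phi \<Longrightarrow> neg b \<longleftrightarrow> \<not> pos b"
  using pos_or_neg not_pos_neg by blast

lemma neg_iff: "neg b \<longleftrightarrow> pos (- b)"
proof -
  have e: "- (\<Sum>j\<in>{1..DIM('a)}. of_int (c j) *\<^sub>R alpha j) = (\<Sum>j\<in>{1..DIM('a)}. of_int (- c j) *\<^sub>R alpha j)" for c :: "nat \<Rightarrow> int"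
    by (simp add: sum_negf[symmetric])
  have e2: "(\<Sum>j\<in>{1..DIM('a)}. of_int (c j) *\<^sub>R alpha j) = - (\<Sum>j\<in>{1..DIM('a)}. of_int (- c j) *\<^sub>R alpha j)" for c :: "nat \<Rightarrow> int"
    by (simp add: sum_negf[symmetric])
  show ?thesis
  proof
    assume "neg b"
    then obtain c where "b \<in> Phi" "b = (\<Sum>j\<in>{1..DIM('a)}. of_int (c j) *\<^sub>R alpha j)" "\<forall>j\<in>{1..DIM('a)}. c j \<le> 0"
      unfolding neg_def by blast
    then show "pos (- b)" unfolding pos_def
    proof (intro conjI exI)
      show "- b \<in> Phi" using neg_closed \<open>b \<in> Phi\<close> by blast
      show "- b = (\<Sum>j\<in>{1..DIM('a)}. of_int (- c j) *\<^sub>R alpha j)" using e[of c] \<open>b = _\<close> by simp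
      show "\<forall>j\<in>{1..DIM('a)}. - c j \<ge> 0" using \<open>\<forall>j\<in>_. c j \<le> 0\<close> by auto
    qed
  next
    assume "pos (- b)"
    then obtain c where "- b \<in> Phi" "- b = (\<Sum>j\<in>{1..DIM('a)}. of_int (c j) *\<^sub>R alpha j)" "\<forall>j\<in>{1..DIM('a)}. c j \<ge> 0"
      unfolding pos_def by blast
    then show "neg b" unfolding neg_def
    proof (intro conjI exI)
      show "b \<in> Phi" using neg_closed[of "-b"] \<open>-b \<in> Phi\<close> by simp
      show "b = (\<Sum>j\<in>{1..DIM('a)}. of_int (- c j) *\<^sub>R alpha j)" using e2[of c] \<open>-b = _\<close>
        by (metis minus_minus)
      show "\<forall>j\<in>{1..DIM('a)}. - c j \<le> 0" using \<open>\<forall>j\<in>_. c j \<ge> 0\<close> by auto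
    qed
  qed
qed

lemma delta_sum: "j \<in> {1..DIM('a)} \<Longrightarrow> (\<Sum>k\<in>{1..DIM('a)}. (if k = j then x else 0) *\<^sub>R alpha k) = x *\<^sub>R alpha j"
  by (simp add: if_distrib[of "\<lambda>x. x *\<^sub>R _"] sum.delta' cong: if_cong)

lemma pos_alpha: "j \<in> {1..DIM('a)} \<Longrightarrow> pos (alpha j)"
proof -
  assume j: "j \<in> {1..DIM('a)}"
  have "(\<Sum>k\<in>{1..DIM('a)}. real_of_int (if k = j then 1 else 0) *\<^sub>R alpha k)
      = (\<Sum>k\<in>{1..DIM('a)}. (if k = j then 1 else 0) *\<^sub>R alpha k)"
    by (rule sum.cong) auto
  also have "\<dots> = alpha j" using delta_sum[OF j, of 1] by simp
  finally show ?thesis unfolding pos_def using alpha_in[OF j]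
    by (intro conjI exI[of _ "\<lambda>k. if k = j then 1 else 0"]) auto
qed


lemma S_lemma:
  assumes i: "i \<in> {1..DIM('a)}" and b: "pos b" and ne: "b \<noteq> alpha i"
  shows "pos (rrefl (alpha i) b)"
proof (rule ccontr)
  assume np: "\<not> pos (rrefl (alpha i) b)"
  have rin: "rrefl (alpha i) b \<in> Phi" using refl_closed alpha_in[OF i] b unfolding pos_def by blast
  then have "neg (rrefl (alpha i) b)" using np pos_or_neg by blast
  then obtain d where d: "rrefl (alpha i) b = (\<Sum>j\<in>{1..DIM('a)}. of_int (d j) *\<^sub>R alpha j)"
      "\<forall>j\<in>{1..DIM('a)}. (d::nat\<Rightarrow>int) j \<le> 0" unfolding neg_def by blast
  obtain c where c: "b \<in> Phi" "b = (\<Sum>j\<in>{1..DIM('a)}. of_int (c j) *\<^sub>R alpha j)"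
      "\<forall>j\<in>{1..DIM('a)}. (c::nat\<Rightarrow>int) j \<ge> 0" using b unfolding pos_def by blast
  define k where "k = 2 * (b \<bullet> alpha i) / (alpha i \<bullet> alpha i)"
  have "rrefl (alpha i) b = b - k *\<^sub>R alpha i" unfolding rrefl_def k_def by simp
  also have "\<dots> = (\<Sum>j\<in>{1..DIM('a)}. of_int (c j) *\<^sub>R alpha j) - (\<Sum>j\<in>{1..DIM('a)}. (if j = i then k else 0) *\<^sub>R alpha j)"
    using delta_sum[OF i, of k] c(2) by simp
  also have "\<dots> = (\<Sum>j\<in>{1..DIM('a)}. (of_int (c j) - (if j = i then k else 0)) *\<^sub>R alpha j)"
    by (simp add: scaleR_diff_left sum_subtractf)
  finally have eq: "(\<Sum>j\<in>{1..DIM('a)}. (of_int (c j) - (if j = i then k else 0)) *\<^sub>R alpha j)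
      = (\<Sum>j\<in>{1..DIM('a)}. of_int (d j) *\<^sub>R alpha j)" using d(1) by simp
  have c0: "c j = 0" if "j \<in> {1..DIM('a)}" "j \<noteq> i" for j
  proof -
    have "of_int (c j) - (if j = i then k else 0) = real_of_int (d j)" by (rule uniq[OF eq that(1)])
    then have "c j = d j" using that(2) by simp
    then show ?thesis using c(3) d(2) that(1) by force
  qed
  have "b = (\<Sum>j\<in>{1..DIM('a)}. (if j = i then of_int (c i) else 0) *\<^sub>R alpha j)"
    unfolding c(2) by (rule sum.cong) (auto simp: c0)
  also have "\<dots> = of_int (c i) *\<^sub>R alpha i" by (rule delta_sum[OF i])
  finally have bi: "b = of_int (c i) *\<^sub>R alpha i" .
  then have "real_of_int (c i) = 1 \<or> real_of_int (c i) = -1" using reduced[OF alpha_in[OF i], of "real_of_int (c i)"] c(1) by blast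
  moreover have "real_of_int (c i) \<ge> 0" using c(3) i by simp
  ultimately have "real_of_int (c i) = 1" by linarith
  then show False using bi ne by simp
qed

definition wd :: "nat list \<Rightarrow> 'a \<Rightarrow> 'a" where
  "wd js = foldr (\<circ>) (map (\<lambda>j. rrefl (alpha j)) js) id"

lemma wd_Nil[simp]: "wd [] = id" by (simp add: wd_def)
lemma wd_Cons[simp]: "wd (j # js) = rrefl (alpha j) \<circ> wd js" by (simp add: wd_def)
lemma wd_append: "wd (xs @ ys) = wd xs \<circ> wd ys"
  by (induction xs) (auto simp: o_assoc)

lemma gen_by_wd: "gen_by (simple_refls alpha J) = {wd js | js. set js \<subseteq> J}"
proof -
  have "{foldr (\<circ>) fs id |fs. set fs \<subseteq> (\<lambda>i. rrefl (alpha i)) ` J} = {wd js | js. set js \<subseteq> J}"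
  proof (intro equalityI subsetI)
    fix f assume "f \<in> {foldr (\<circ>) fs id |fs. set fs \<subseteq> (\<lambda>i. rrefl (alpha i)) ` J}"
    then obtain fs where "f = foldr (\<circ>) fs id" "set fs \<subseteq> (\<lambda>i. rrefl (alpha i)) ` J" by blast
    moreover then obtain js where "set js \<subseteq> J" "fs = map (\<lambda>i. rrefl (alpha i)) js"
      using list_of_set by blast
    ultimately show "f \<in> {wd js | js. set js \<subseteq> J}" unfolding wd_def by blast
  next
    fix f assume "f \<in> {wd js | js. set js \<subseteq> J}"
    then show "f \<in> {foldr (\<circ>) fs id |fs. set fs \<subseteq> (\<lambda>i. rrefl (alpha i)) ` J}"
      unfolding wd_def by force
  qed
  then show ?thesis unfolding gen_by_def simple_refls_def .
qed

lemma W_wd: "weyl_group alpha = {wd js | js. set js \<subseteq> {1..DIM('a)}}"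
  unfolding weyl_group_def gen_by_wd ..
lemma P_wd: "parabolic alpha J = {wd js | js. set js \<subseteq> J}"
  unfolding parabolic_def gen_by_wd ..

lemma wd_props:
  assumes "set js \<subseteq> {1..DIM('a)}"
  shows "linear (wd js) \<and> (\<forall>x y. wd js x \<bullet> wd js y = x \<bullet> y) \<and> (\<forall>b\<in>Phi. wd js b \<in> Phi)"
  using assms
proof (induction js)
  case Nil then show ?case by (simp add: linear_iff)
next
  case (Cons j js)
  then have j: "j \<in> {1..DIM('a)}" and IH: "linear (wd js)" "\<forall>x y. wd js x \<bullet> wd js y = x \<bullet> y"
     "\<forall>b\<in>Phi. wd js b \<in> Phi" by auto
  have l: "linear (rrefl (alpha j) \<circ> wd js)" by (rule linear_compose[OF IH(1) linear_rrefl])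
  have "\<forall>x y. (rrefl (alpha j) \<circ> wd js) x \<bullet> (rrefl (alpha j) \<circ> wd js) y = x \<bullet> y"
    using IH(2) rrefl_inner[OF alpha_nz[OF j]] by simp
  moreover have "\<forall>b\<in>Phi. (rrefl (alpha j) \<circ> wd js) b \<in> Phi"
    using IH(3) alpha_in[OF j] refl_closed by simp
  ultimately show ?case using l by (simp only: wd_Cons) blast
qed

lemma wd_linear: "set js \<subseteq> {1..DIM('a)} \<Longrightarrow> linear (wd js)" using wd_props by blast
lemma wd_inner: "set js \<subseteq> {1..DIM('a)} \<Longrightarrow> wd js x \<bullet> wd js y = x \<bullet> y" using wd_props by blast
lemma wd_Phi: "set js \<subseteq> {1..DIM('a)} \<Longrightarrow> b \<in> Phi \<Longrightarrow> wd js b \<in> Phi" using wd_props by blast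

lemma wd_rev: "set js \<subseteq> {1..DIM('a)} \<Longrightarrow> wd (rev js) \<circ> wd js = id"
proof (induction js)
  case Nil then show ?case by simp
next
  case (Cons j js)
  then have j: "j \<in> {1..DIM('a)}" by auto
  have "wd (rev (j # js)) \<circ> wd (j # js) = wd (rev js) \<circ> (rrefl (alpha j) \<circ> rrefl (alpha j)) \<circ> wd js"
    by (simp add: wd_append o_assoc)
  also have "\<dots> = wd (rev js) \<circ> wd js" using rrefl_comp_self[OF alpha_nz[OF j]] by simp
  also have "\<dots> = id" using Cons.prems by (intro Cons.IH) simp
  finally show ?case .
qed

lemma map_sr: "set js \<subseteq> A \<Longrightarrow> set (map (\<lambda>j. rrefl (alpha j)) js) \<subseteq> simple_refls alpha A"
  unfolding simple_refls_def by auto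

lemma wlen_le: "set js \<subseteq> {1..DIM('a)} \<Longrightarrow> wlen alpha (wd js) \<le> length js"
  unfolding wlen_def
  apply (rule Least_le)
  apply (rule exI[of _ "map (\<lambda>j. rrefl (alpha j)) js"])
  using map_sr[of js] by (simp add: wd_def)

lemma wlen_ex:
  assumes "w \<in> weyl_group alpha"
  shows "\<exists>js. set js \<subseteq> {1..DIM('a)} \<and> length js = wlen alpha w \<and> wd js = w"
proof -
  obtain js0 where js0: "set js0 \<subseteq> {1..DIM('a)}" "w = wd js0" using assms W_wd by auto
  let ?P = "\<lambda>k. \<exists>fs. set fs \<subseteq> simple_refls alpha {1..DIM('a)} \<and> length fs = k \<and> foldr (\<circ>) fs id = w"
  have "?P (length js0)"
    apply (rule exI[of _ "map (\<lambda>j. rrefl (alpha j)) js0"])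
    using js0 map_sr[of js0] by (simp add: wd_def)
  then have "?P (wlen alpha w)" unfolding wlen_def by (rule LeastI)
  then obtain fs where fs: "set fs \<subseteq> (\<lambda>i. rrefl (alpha i)) ` {1..DIM('a)}" "length fs = wlen alpha w"
    "foldr (\<circ>) fs id = w" unfolding simple_refls_def by blast
  then obtain js where "set js \<subseteq> {1..DIM('a)}" "fs = map (\<lambda>i. rrefl (alpha i)) js"
    using list_of_set by blast
  then show ?thesis using fs unfolding wd_def by auto
qed

lemma Del:
  assumes "set js \<subseteq> {1..DIM('a)}" and "pos b" and "neg (wd js b)"
  shows "\<exists>js'. set js' \<subseteq> set js \<and> length js' < length js \<and> wd js \<circ> rrefl b = wd js'"
  using assms
proof (induction js)
  case Nil then show ?case using not_pos_neg by auto
next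
  case (Cons j js)
  then have j: "j \<in> {1..DIM('a)}" and js: "set js \<subseteq> {1..DIM('a)}" by auto
  show ?case
  proof (cases "neg (wd js b)")
    case True
    then obtain js' where "set js' \<subseteq> set js" "length js' < length js" "wd js \<circ> rrefl b = wd js'"
      using Cons js by blast
    moreover have "wd (j # js) \<circ> rrefl b = wd (j # js')"
      by (simp only: wd_Cons o_assoc[symmetric] \<open>wd js \<circ> rrefl b = wd js'\<close>)
    moreover have "set (j # js') \<subseteq> set (j # js)" "length (j # js') < length (j # js)"
      using \<open>set js' \<subseteq> set js\<close> \<open>length js' < length js\<close> by auto
    ultimately show ?thesis by blast
  next
    case False
    have bP: "b \<in> Phi" using Cons.prems(2) unfolding pos_def by blast
    then have "pos (wd js b)" using False pos_or_neg wd_Phi[OF js] by blast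
    moreover have "neg (rrefl (alpha j) (wd js b))" using Cons.prems(3) by simp
    ultimately have eq: "wd js b = alpha j" using S_lemma[OF j] not_pos_neg by blast
    have "wd js \<circ> rrefl b = rrefl (wd js b) \<circ> wd js"
      by (rule ext) (simp add: rrefl_conj[OF wd_linear[OF js]] wd_inner[OF js])
    then have "wd (j # js) \<circ> rrefl b = (rrefl (alpha j) \<circ> rrefl (alpha j)) \<circ> wd js"
      by (simp only: eq wd_Cons o_assoc[symmetric])
    also have "\<dots> = wd js" using rrefl_comp_self[OF alpha_nz[OF j]] by simp
    finally have "wd (j # js) \<circ> rrefl b = wd js" .
    moreover have "set js \<subseteq> set (j # js)" "length js < length (j # js)" by auto
    ultimately show ?thesis by blast
  qed
qed


lemma exists_neg:
  assumes "pos b"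
  shows "\<exists>js. set js \<subseteq> {1..DIM('a)} \<and> neg (wd js b)"
proof -
  have "independent (alpha ` {1..DIM('a)})" using ss unfolding simple_system_def by auto
  then obtain g :: "'a \<Rightarrow> real" where g: "linear g" "\<forall>x\<in>alpha ` {1..DIM('a)}. g x = 1"
    using linear_independent_extend[of "alpha ` {1..DIM('a)}" "\<lambda>_. 1"] by blast
  have gsum: "g (\<Sum>j\<in>{1..DIM('a)}. of_int (c j) *\<^sub>R alpha j) = (\<Sum>j\<in>{1..DIM('a)}. real_of_int (c j))" for c
  proof -
    have "g (\<Sum>j\<in>{1..DIM('a)}. of_int (c j) *\<^sub>R alpha j) = (\<Sum>j\<in>{1..DIM('a)}. g (of_int (c j) *\<^sub>R alpha j))"
      by (simp add: linear_sum[OF g(1)])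
    also have "\<dots> = (\<Sum>j\<in>{1..DIM('a)}. real_of_int (c j))"
      by (rule sum.cong) (auto simp: linear_scale[OF g(1)] g(2))
    finally show ?thesis .
  qed
  have gpos: "g b \<ge> 0" if pb: "pos b" for b
  proof -
    obtain c where "b = (\<Sum>j\<in>{1..DIM('a)}. of_int (c j) *\<^sub>R alpha j)" "\<forall>j\<in>{1..DIM('a)}. (c::nat\<Rightarrow>int) j \<ge> 0"
      using pb[unfolded pos_def] by blast
    then show ?thesis using gsum[of c] by (auto intro: sum_nonneg)
  qed
  have main: "\<forall>b. pos b \<longrightarrow> g b < real m \<longrightarrow> (\<exists>js. set js \<subseteq> {1..DIM('a)} \<and> neg (wd js b))" for m
  proof (induction m)
    case 0 then show ?case using gpos by force
  next
    case (Suc m)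
    show ?case
    proof (intro allI impI)
      fix b assume b: "pos b" and gb: "g b < real (Suc m)"
      show "\<exists>js. set js \<subseteq> {1..DIM('a)} \<and> neg (wd js b)"
      proof (cases "\<exists>i\<in>{1..DIM('a)}. b = alpha i")
        case True
        then obtain i where i: "i \<in> {1..DIM('a)}" "b = alpha i" by blast
        have "wd [i] b = - alpha i" using i rrefl_self[OF alpha_nz[OF i(1)]] by simp
        then have "neg (wd [i] b)" using neg_iff pos_alpha[OF i(1)] by simp
        then show ?thesis using i by (intro exI[of _ "[i]"]) auto
      next
        case False
        obtain c where c: "b \<in> Phi" "b = (\<Sum>j\<in>{1..DIM('a)}. of_int (c j) *\<^sub>R alpha j)"
          "\<forall>j\<in>{1..DIM('a)}. (c::nat\<Rightarrow>int) j \<ge> 0" using b unfolding pos_def by blast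
        have "\<exists>i\<in>{1..DIM('a)}. b \<bullet> alpha i > 0"
        proof (rule ccontr)
          assume "\<not> ?thesis"
          then have le: "\<forall>i\<in>{1..DIM('a)}. b \<bullet> alpha i \<le> 0" by auto
          have "b \<bullet> b = b \<bullet> (\<Sum>j\<in>{1..DIM('a)}. of_int (c j) *\<^sub>R alpha j)" using c(2) by simp
          also have "\<dots> = (\<Sum>j\<in>{1..DIM('a)}. of_int (c j) * (b \<bullet> alpha j))"
            by (simp add: inner_sum_right)
          also have "\<dots> \<le> 0" using le c(3)
            by (intro sum_nonpos) (simp add: mult_nonneg_nonpos)
          finally have "b \<bullet> b \<le> 0" .
          then have "b \<bullet> b = 0" using inner_ge_zero[of b] by linarith
          then have "b = 0" by simp
          then show False using c(1) zero_notin by simp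
        qed
        then obtain i where i: "i \<in> {1..DIM('a)}" and bi: "b \<bullet> alpha i > 0" by blast
        define k where "k = 2 * (b \<bullet> alpha i) / (alpha i \<bullet> alpha i)"
        have "k \<in> \<int>" unfolding k_def using cryst_int[OF alpha_in[OF i] c(1)] .
        then obtain z where z: "k = of_int z" by (auto elim: Ints_cases)
        have "k > 0" unfolding k_def using bi alpha_nz[OF i] by simp
        then have "z > 0" using z by simp
        then have k1: "k \<ge> 1" using z by simp
        define b' where "b' = rrefl (alpha i) b"
        have b'eq: "b' = b - k *\<^sub>R alpha i" unfolding b'_def rrefl_def k_def by simp
        have "g b' = g b - k" unfolding b'eq using g i
          by (simp add: linear_diff[OF g(1)] linear_scale[OF g(1)])
        then have "g b' < real m" using gb k1 by simp
        moreover have "pos b'" unfolding b'_def using S_lemma[OF i b] False i by blast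
        ultimately obtain js where js: "set js \<subseteq> {1..DIM('a)}" "neg (wd js b')" using Suc.IH by blast
        have "wd (js @ [i]) b = wd js b'" unfolding b'_def by (simp add: wd_append)
        then show ?thesis using js i by (intro exI[of _ "js @ [i]"]) auto
      qed
    qed
  qed
  obtain m :: nat where "g b < real m" using reals_Archimedean2 by blast
  then show ?thesis using main assms by blast
qed

lemma W_props: "w \<in> weyl_group alpha \<Longrightarrow> linear w \<and> (\<forall>x y. w x \<bullet> w y = x \<bullet> y) \<and> (\<forall>b\<in>Phi. w b \<in> Phi)"
  using wd_props W_wd by auto

lemma W_comp: "v \<in> weyl_group alpha \<Longrightarrow> x \<in> weyl_group alpha \<Longrightarrow> v \<circ> x \<in> weyl_group alpha"
proof -
  assume "v \<in> weyl_group alpha" "x \<in> weyl_group alpha"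
  then obtain a c where "set a \<subseteq> {1..DIM('a)}" "v = wd a" "set c \<subseteq> {1..DIM('a)}" "x = wd c"
    unfolding W_wd by blast
  then have "v \<circ> x = wd (a @ c)" "set (a @ c) \<subseteq> {1..DIM('a)}" by (auto simp: wd_append)
  then show ?thesis unfolding W_wd by blast
qed

lemma refl_in_W: assumes "pos b" shows "rrefl b \<in> weyl_group alpha"
proof -
  obtain js where js: "set js \<subseteq> {1..DIM('a)}" "neg (wd js b)" using exists_neg[OF assms] by blast
  obtain js' where js': "set js' \<subseteq> set js" "wd js \<circ> rrefl b = wd js'" using Del[OF js(1) assms js(2)] by blast
  have "rrefl b = (wd (rev js) \<circ> wd js) \<circ> rrefl b" using wd_rev[OF js(1)] by simp
  also have "\<dots> = wd (rev js @ js')" using js' by (simp add: wd_append o_assoc[symmetric])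
  finally have "rrefl b = wd (rev js @ js')" .
  moreover have "set (rev js @ js') \<subseteq> {1..DIM('a)}" using js js' by auto
  ultimately show ?thesis unfolding W_wd by blast
qed

lemma refl_in_P:
  assumes J: "J \<subseteq> {1..DIM('a)}" and u: "u \<in> parabolic alpha J" and "pos b" and "neg (u b)"
  shows "rrefl b \<in> parabolic alpha J"
proof -
  obtain js where js: "set js \<subseteq> J" "u = wd js" using u P_wd by auto
  have jsI: "set js \<subseteq> {1..DIM('a)}" using js J by auto
  obtain js' where js': "set js' \<subseteq> set js" "wd js \<circ> rrefl b = wd js'" using Del[OF jsI assms(3)] assms(4) js by blast
  have "rrefl b = (wd (rev js) \<circ> wd js) \<circ> rrefl b" using wd_rev[OF jsI] by simp
  also have "\<dots> = wd (rev js @ js')" using js' by (simp add: wd_append o_assoc[symmetric])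
  finally have "rrefl b = wd (rev js @ js')" .
  moreover have "set (rev js @ js') \<subseteq> J" using js js' by auto
  ultimately show ?thesis unfolding P_wd by blast
qed

lemma Ka:
  assumes w: "w \<in> weyl_group alpha" and b: "pos b" and n: "neg (w b)"
  shows "wlen alpha (w \<circ> rrefl b) < wlen alpha w"
proof -
  obtain js where js: "set js \<subseteq> {1..DIM('a)}" "length js = wlen alpha w" "wd js = w" using wlen_ex[OF w] by blast
  obtain js' where js': "set js' \<subseteq> set js" "length js' < length js" "wd js \<circ> rrefl b = wd js'"
    using Del[OF js(1) b] n js(3) by blast
  have "wlen alpha (wd js') \<le> length js'" using wlen_le js js' by auto
  then show ?thesis using js js' by auto
qed

lemma Kb:
  assumes w: "w \<in> weyl_group alpha" and b: "pos b" and p: "pos (w b)"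
  shows "wlen alpha w < wlen alpha (w \<circ> rrefl b)"
proof -
  have wt: "w \<circ> rrefl b \<in> weyl_group alpha" using W_comp[OF w refl_in_W[OF b]] .
  have bnz: "b \<noteq> 0" using b zero_notin unfolding pos_def by auto
  have "(w \<circ> rrefl b) b = - w b" using rrefl_self[OF bnz] W_props[OF w] by (simp add: linear_neg)
  then have "neg ((w \<circ> rrefl b) b)" using neg_iff p by simp
  from Ka[OF wt b this] have "wlen alpha (w \<circ> rrefl b \<circ> rrefl b) < wlen alpha (w \<circ> rrefl b)" .
  moreover have "w \<circ> rrefl b \<circ> rrefl b = w" using rrefl_comp_self[OF bnz] by (simp add: o_assoc[symmetric])
  ultimately show ?thesis by simp
qed

lemma sigma_char:
  assumes w: "w \<in> weyl_group alpha" and b: "pos (alpha i)"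
  shows "sigma alpha i w = (if (i = 0) = neg (w (alpha i)) then w else w \<circ> rrefl (alpha i))"
proof -
  have "w (alpha i) \<in> Phi" using W_props[OF w] b unfolding pos_def by blast
  then consider "pos (w (alpha i))" "\<not> neg (w (alpha i))" | "neg (w (alpha i))" "\<not> pos (w (alpha i))"
    using pos_or_neg not_pos_neg by blast
  then show ?thesis
  proof cases
    case 1
    then show ?thesis using Kb[OF w b 1(1)] unfolding sigma_def by auto
  next
    case 2
    then show ?thesis using Ka[OF w b 2(1)] unfolding sigma_def by auto
  qed
qed

lemma coset_mult:
  assumes J: "J \<subseteq> {1..DIM('a)}" and g: "g \<in> parabolic alpha J"
  shows "right_coset alpha J (g \<circ> x) = right_coset alpha J x"
proof -
  obtain js where js: "set js \<subseteq> J" "g = wd js" using g P_wd by auto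
  have jsI: "set js \<subseteq> {1..DIM('a)}" using js J by auto
  have eqP: "(\<lambda>u. u \<circ> g) ` parabolic alpha J = parabolic alpha J"
  proof (intro equalityI subsetI)
    fix f assume "f \<in> (\<lambda>u. u \<circ> g) ` parabolic alpha J"
    then obtain ks where "set ks \<subseteq> J" "f = wd ks \<circ> wd js" using P_wd js by auto
    then show "f \<in> parabolic alpha J" unfolding P_wd using js
      by (intro CollectI exI[of _ "ks @ js"]) (auto simp: wd_append)
  next
    fix f assume "f \<in> parabolic alpha J"
    then obtain ks where ks: "set ks \<subseteq> J" "f = wd ks" using P_wd by auto
    have "f = wd (ks @ rev js) \<circ> g"
      using wd_rev[OF jsI] js ks by (simp add: wd_append o_assoc[symmetric])
    moreover have "wd (ks @ rev js) \<in> parabolic alpha J" unfolding P_wd using ks js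
      by (intro CollectI exI[of _ "ks @ rev js"]) auto
    ultimately show "f \<in> (\<lambda>u. u \<circ> g) ` parabolic alpha J" by blast
  qed
  have "right_coset alpha J (g \<circ> x) = (\<lambda>u. u \<circ> x) ` ((\<lambda>u. u \<circ> g) ` parabolic alpha J)"
    unfolding right_coset_def by (simp add: image_image o_assoc)
  also have "\<dots> = right_coset alpha J x" unfolding right_coset_def by (simp only: eqP)
  finally show ?thesis .
qed

lemma id_in_P: "id \<in> parabolic alpha J"
  unfolding P_wd by (auto intro!: exI[of _ "[]"])

end

theorem proposition5:
  fixes Phi :: "'a::euclidean_space set" and alpha :: "nat \<Rightarrow> 'a"
    and J :: "nat set" and w w' :: "'a \<Rightarrow> 'a" and i :: nat
  assumes "crystallographic_root_system Phi"
    and "irreducible_root_system Phi"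
    and "simple_system Phi alpha"
    and "highest_root Phi alpha (alpha 0)"
    and "J \<subseteq> {1..DIM('a)}"
    and "w \<in> weyl_group alpha" and "w' \<in> weyl_group alpha"
    and "right_coset alpha J w = right_coset alpha J w'"
    and "i \<le> DIM('a)"
  shows "right_coset alpha J (sigma alpha i w) = right_coset alpha J (sigma alpha i w')"
proof -
  interpret RS Phi alpha using assms(1,3) by unfold_locales
  have bpos: "pos (alpha i)"
  proof (cases "i = 0")
    case False then show ?thesis using pos_alpha assms(9) by auto
  next
    case True
    have one: "1 \<in> {1..DIM('a)}" using DIM_positive[where 'a='a] by auto
    obtain c where c: "alpha 0 - alpha 1 = (\<Sum>j\<in>{1..DIM('a)}. of_int (c j) *\<^sub>R alpha j)"
        "\<forall>j\<in>{1..DIM('a)}. (c::nat\<Rightarrow>int) j \<ge> 0"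
      using assms(4) alpha_in[OF one] unfolding highest_root_def by blast
    define c' where "c' j = c j + (if j = 1 then 1 else 0)" for j
    have "alpha 0 = (alpha 0 - alpha 1) + alpha 1" by simp
    also have "\<dots> = (\<Sum>j\<in>{1..DIM('a)}. of_int (c j) *\<^sub>R alpha j)
        + (\<Sum>j\<in>{1..DIM('a)}. (if j = 1 then 1 else 0) *\<^sub>R alpha j)"
      using c(1) delta_sum[OF one, of 1] by simp
    also have "\<dots> = (\<Sum>j\<in>{1..DIM('a)}. of_int (c' j) *\<^sub>R alpha j)"
      unfolding sum.distrib[symmetric] by (rule sum.cong) (auto simp: c'_def scaleR_add_left)
    finally have e: "alpha 0 = (\<Sum>j\<in>{1..DIM('a)}. of_int (c' j) *\<^sub>R alpha j)" .
    have "\<forall>j\<in>{1..DIM('a)}. c' j \<ge> 0" using c(2) by (auto simp: c'_def)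
    moreover have "alpha 0 \<in> Phi" using assms(4) unfolding highest_root_def by blast
    ultimately show ?thesis unfolding pos_def True using e by blast
  qed
  have "w' \<in> right_coset alpha J w'" unfolding right_coset_def
    by (rule image_eqI[where x=id]) (simp_all add: id_in_P)
  then have "w' \<in> right_coset alpha J w" using assms(8) by simp
  then obtain u where u: "u \<in> parabolic alpha J" "w' = u \<circ> w"
    unfolding right_coset_def by (elim imageE) simp
  obtain js where js: "set js \<subseteq> J" "u = wd js" using u(1) P_wd by auto
  have jsI: "set js \<subseteq> {1..DIM('a)}" using js assms(5) by auto
  have ul: "linear u" and uP: "\<And>b. b \<in> Phi \<Longrightarrow> u b \<in> Phi"
    using wd_linear[OF jsI] wd_Phi[OF jsI] js by auto
  define g where "g = w (alpha i)"
  have gPhi: "g \<in> Phi" unfolding g_def using W_props[OF assms(6)] bpos unfolding pos_def by blast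
  have wb': "w' (alpha i) = u g" by (simp add: u(2) g_def)
  have C1: "right_coset alpha J w' = right_coset alpha J w" using assms(8) by simp
  have C2: "right_coset alpha J (w' \<circ> rrefl (alpha i)) = right_coset alpha J (w \<circ> rrefl (alpha i))"
    using coset_mult[OF assms(5) u(1), of "w \<circ> rrefl (alpha i)"] by (simp add: u(2) o_assoc)
  have Mixed: "right_coset alpha J (w \<circ> rrefl (alpha i)) = right_coset alpha J w"
    if mx: "neg g \<noteq> neg (u g)"
  proof -
    have r: "rrefl g \<in> parabolic alpha J"
    proof (cases "neg g")
      case True
      then have "pos (u g)" using mx pos_or_neg uP[OF gPhi] by blast
      moreover have "u (- g) = - u g" using ul by (simp add: linear_neg)
      ultimately have "neg (u (- g))" using neg_iff by simp
      moreover have "pos (- g)" using True neg_iff by simp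
      ultimately show ?thesis using refl_in_P[OF assms(5) u(1)] rrefl_neg[of g] by metis
    next
      case False
      then have "pos g" using pos_or_neg gPhi by blast
      moreover have "neg (u g)" using False mx by simp
      ultimately show ?thesis using refl_in_P[OF assms(5) u(1)] by blast
    qed
    have "w \<circ> rrefl (alpha i) = rrefl g \<circ> w" unfolding g_def
      using W_props[OF assms(6)] by (intro ext) (simp add: rrefl_conj)
    then show ?thesis using coset_mult[OF assms(5) r, of w] by simp
  qed
  show ?thesis
  proof (cases "neg g = neg (u g)")
    case True
    then show ?thesis unfolding sigma_char[OF assms(6) bpos] sigma_char[OF assms(7) bpos] wb'
      using C1 C2 by (simp add: g_def)
  next
    case False
    then have M: "right_coset alpha J (w \<circ> rrefl (alpha i)) = right_coset alpha J w" by (rule Mixed)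
    show ?thesis unfolding sigma_char[OF assms(6) bpos] sigma_char[OF assms(7) bpos] wb'
      using C1 C2 M by (simp add: g_def)
  qed
qed

end
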